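(* Let $X_\lambda$ be a cellular multipointed $d$-space and let $\gamma_1,\gamma_2$ be execution paths of $X_\lambda$ such that there exist two nondecreasing set maps $\phi_1,\phi_2:[0,1]\to[0,1]$ (not assumed continuous) with $\phi_i(0)=0$, $\phi_i(1)=1$, and $\gamma_1(\phi_1(t))=\gamma_2(t)$, $\gamma_1(t)=\gamma_2(\phi_2(t))$ for all $t\in[0,1]$. Then $\phi_1,\phi_2\in\mathcal{G}(1,1)$ and $\phi_2=\phi_1^{-1}$.
   Context: Work in $\mathbf{Top}$, the category of $\Delta$-generated spaces (or $\Delta$-Hausdorff $\Delta$-generated spaces). $\mathcal{G}(1,1)$: the nondecreasing homeomorphisms of $[0,1]$; $*_N$: normalized composition of paths on $[0,1]$ (first path on $[0,1/2]$, second on $[1/2,1]$, double speed). A multipointed $d$-space $X=(|X|,X^0,\mathbb{P}^{\mathcal{G}}X)$: a space, a subset of states, a set of continuous execution paths $[0,1]\to|X|$ with endpoints in $X^0$, stable under precomposition by $\mathcal{G}(1,1)$ and $*_N$. Colimits: underlying spaces and states by colimits, execution paths generated by images under $*_N$ and reparametrization. ${\rm Glob}^{\mathcal{G}}(Z)$: quotient of $\{0,1\}\sqcup Z\times[0,1]$ with $(z,0)\sim0$, $(z,1)\sim1$, states $\{0,1\}$, paths $t\mapsto(z,\phi(t))$, $\phi\in\mathcal{G}(1,1)$. Cellular: $X_\lambda=\varinjlim_{\nu<\lambda}X_\nu$ for an ordinal $\lambda$ and colimit-preserving $\nu\mapsto X_\nu$ with $X_0=(X^0,X^0,\varnothing)$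 a set and each $X_\nu\to X_{\nu+1}$ a pushout of some ${\rm Glob}^{\mathcal{G}}(\mathbf{S}^{n_\nu-1})\subset{\rm Glob}^{\mathcal{G}}(\mathbf{D}^{n_\nu})$. *)

theory Defs
  imports "HOL-Analysis.Analysis"
begin

text \<open>Reparametrizations G(1,1): nondecreasing homeomorphisms of [0,1]
  (functions real to real; only their values on [0,1] matter).\<close>
definition G11 :: "(real \<Rightarrow> real) set" where
  "G11 = {\<phi>. mono_on {0..1} \<phi> \<and> (\<exists>\<psi>. homeomorphism {0..1} {0..1} \<phi> \<psi>)}"

definition normcomp :: "(real \<Rightarrow> 'a) \<Rightarrow> (real \<Rightarrow> 'a) \<Rightarrow> real \<Rightarrow> 'a" where
  "normcomp g1 g2 = (\<lambda>t. if t \<le> 1/2 then g1 (2*t) else g2 (2*t - 1))"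

text \<open>Set of execution paths generated by P: smallest set containing P, stable under
  reparametrization by G(1,1) and normalized composition (paths are identified
  when they agree on [0,1]).\<close>
inductive_set gen_paths :: "(real \<Rightarrow> 'a) set \<Rightarrow> (real \<Rightarrow> 'a) set" for P where
  base: "g \<in> P \<Longrightarrow> g \<in> gen_paths P"
| reparam: "g \<in> gen_paths P \<Longrightarrow> \<phi> \<in> G11 \<Longrightarrow> g \<circ> \<phi> \<in> gen_paths P"
| concat: "g1 \<in> gen_paths P \<Longrightarrow> g2 \<in> gen_paths P \<Longrightarrow> g1 1 = g2 0
            \<Longrightarrow> normcomp g1 g2 \<in> gen_paths P"
| ext: "g \<in> gen_paths P \<Longrightarrow> (\<forall>t\<in>{0..1}. h t = g t) \<Longrightarrow> h \<in> gen_paths P"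

record 'a mdspace =
  space :: "'a topology"
  states :: "'a set"
  paths :: "(real \<Rightarrow> 'a) set"

definition md_morphism :: "'a mdspace \<Rightarrow> 'b mdspace \<Rightarrow> ('a \<Rightarrow> 'b) \<Rightarrow> bool" where
  "md_morphism X Y f \<longleftrightarrow> continuous_map (space X) (space Y) f \<and> f ` states X \<subseteq> states Y
     \<and> (\<forall>g\<in>paths X. f \<circ> g \<in> paths Y)"

text \<open>Disk D^n and sphere S^{n-1}, as finitely supported vectors nat => real
  (with the product topology, which on these sets is the Euclidean one).\<close>
definition disk :: "nat \<Rightarrow> (nat \<Rightarrow> real) set" where
  "disk n = {x. (\<forall>i\<ge>n. x i = 0) \<and> (\<Sum>i<n. (x i)^2) \<le> 1}"
definition sphere_m1 :: "nat \<Rightarrow> (nat \<Rightarrow> real) set" where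
  "sphere_m1 n = {x. (\<forall>i\<ge>n. x i = 0) \<and> (\<Sum>i<n. (x i)^2) = 1}"

text \<open>Points of Glob(Z): the two states and interior points (z,t), 0<t<1.\<close>
datatype gpt = Gbot | Gtop | Gin "nat \<Rightarrow> real" real

definition gq :: "(nat \<Rightarrow> real) \<times> real \<Rightarrow> gpt" where
  "gq p = (if snd p = 0 then Gbot else if snd p = 1 then Gtop else Gin (fst p) (snd p))"

definition glob_carrier :: "(nat \<Rightarrow> real) set \<Rightarrow> gpt set" where
  "glob_carrier Z = {Gbot, Gtop} \<union> gq ` (Z \<times> {0..1})"

text \<open>Quotient topology of {0,1} + Z x [0,1].\<close>
definition glob_top :: "(nat \<Rightarrow> real) set \<Rightarrow> gpt topology" where
  "glob_top Z = topology (\<lambda>U. U \<subseteq> glob_carrier Z \<and>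
     openin (subtopology (prod_topology euclidean euclidean) (Z \<times> {0..1}))
            {p \<in> Z \<times> {0..1}. gq p \<in> U})"

definition glob_paths :: "(nat \<Rightarrow> real) set \<Rightarrow> (real \<Rightarrow> gpt) set" where
  "glob_paths Z = {(\<lambda>t. gq (z, \<phi> t)) | z \<phi>. z \<in> Z \<and> \<phi> \<in> G11}"

definition Glob :: "(nat \<Rightarrow> real) set \<Rightarrow> gpt mdspace" where
  "Glob Z = \<lparr>space = glob_top Z, states = {Gbot, Gtop}, paths = glob_paths Z\<rparr>"

text \<open>B is (up to isomorphism, with X_mu -> X_nu an inclusion) the pushout of
  Glob(S^{n-1}) \<subseteq> Glob(D^n) along the attaching map f restricted to Glob(S^{n-1}).\<close>
definition cell_attach :: "'a mdspace \<Rightarrow> 'a mdspace \<Rightarrow> bool" where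
  "cell_attach A B \<longleftrightarrow> (\<exists>n f. md_morphism (Glob (sphere_m1 n)) A f \<and>
     topspace (space A) \<subseteq> topspace (space B) \<and>
     inj_on f (glob_carrier (disk n) - glob_carrier (sphere_m1 n)) \<and>
     f ` (glob_carrier (disk n) - glob_carrier (sphere_m1 n)) = topspace (space B) - topspace (space A) \<and>
     (\<forall>U. openin (space B) U \<longleftrightarrow> U \<subseteq> topspace (space B) \<and>
            openin (space A) (U \<inter> topspace (space A)) \<and>
            openin (glob_top (disk n)) {x \<in> glob_carrier (disk n). f x \<in> U}) \<and>
     states B = states A \<union> f ` {Gbot, Gtop} \<and>
     paths B = gen_paths (paths A \<union> (\<lambda>g. f \<circ> g) ` glob_paths (disk n)))"

text \<open>Y is the colimit of the chain (of inclusions) X_nu, nu \<in> I.\<close>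
definition colim_of :: "'i set \<Rightarrow> ('i \<Rightarrow> 'a mdspace) \<Rightarrow> 'a mdspace \<Rightarrow> bool" where
  "colim_of I X Y \<longleftrightarrow>
     topspace (space Y) = (\<Union>\<nu>\<in>I. topspace (space (X \<nu>))) \<and>
     (\<forall>U. openin (space Y) U \<longleftrightarrow> U \<subseteq> topspace (space Y) \<and>
            (\<forall>\<nu>\<in>I. openin (space (X \<nu>)) (U \<inter> topspace (space (X \<nu>))))) \<and>
     states Y = (\<Union>\<nu>\<in>I. states (X \<nu>)) \<and>
     paths Y = gen_paths (\<Union>\<nu>\<in>I. paths (X \<nu>))"

text \<open>Y = X_lambda is cellular, presented by the tower X_nu (nu < lambda) indexed by
  an initial segment of a well-ordered type.\<close>
definition cellular :: "'i::wellorder \<Rightarrow> ('i \<Rightarrow> 'a mdspace) \<Rightarrow> 'a mdspace \<Rightarrow> bool" where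
  "cellular lam X Y \<longleftrightarrow>
     (\<forall>\<nu><lam. (\<forall>\<mu>. \<not> \<mu> < \<nu>) \<longrightarrow>
         space (X \<nu>) = discrete_topology (states (X \<nu>)) \<and> paths (X \<nu>) = {}) \<and>
     (\<forall>\<nu><lam. \<forall>\<mu><\<nu>. (\<forall>\<kappa>. \<not> (\<mu> < \<kappa> \<and> \<kappa> < \<nu>)) \<longrightarrow> cell_attach (X \<mu>) (X \<nu>)) \<and>
     (\<forall>\<nu><lam. (\<exists>\<mu>. \<mu> < \<nu>) \<and> (\<forall>\<mu><\<nu>. \<exists>\<kappa>. \<mu> < \<kappa> \<and> \<kappa> < \<nu>) \<longrightarrow>
         colim_of {\<mu>. \<mu> < \<nu>} X (X \<nu>)) \<and>
     colim_of {\<nu>. \<nu> < lam} X Y"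

end

theory Submission
  imports Defs
begin


lemma mono_bij_cont:
  fixes \<phi> \<psi> :: "real \<Rightarrow> real"
  assumes m: "mono_on {0..1} \<phi>" and im: "\<phi> ` {0..1} = {0..1}"
  shows "continuous_on {0..1} \<phi>"
proof -
  define e where "e x = (if x < 0 then x else if x > 1 then x else \<phi> x)" for x
  have mono: "e x \<le> e y" if "x \<le> y" for x y
  proof -
    have a: "\<phi> x \<in> {0..1}" if "x \<in> {0..1}" for x using im that by blast
    show ?thesis using that a[of x] a[of y] mono_onD[OF m, of x y]
      unfolding e_def by auto
  qed
  have "e ` UNIV = UNIV"
  proof safe
    fix y :: real
    show "y \<in> range e"
    proof (cases "y < 0 \<or> y > 1")
      case True then show ?thesis unfolding e_def by (intro image_eqI[of _ _ y]) auto
    next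
      case False
      then have "y \<in> \<phi> ` {0..1}" using im by auto
      then obtain x where "x \<in> {0..1}" "y = \<phi> x" by auto
      then show ?thesis unfolding e_def by (intro image_eqI[of _ _ x]) auto
    qed
  qed auto
  then have "continuous_on UNIV e" by (intro continuous_onI_mono) (auto intro: mono)
  then have "continuous_on {0..1} e" by (rule continuous_on_subset) auto
  then show ?thesis by (rule continuous_on_eq) (auto simp: e_def)
qed

lemma G11I:
  fixes \<phi> \<psi> :: "real \<Rightarrow> real"
  assumes "mono_on {0..1} \<phi>" "mono_on {0..1} \<psi>"
    "\<phi> ` {0..1} \<subseteq> {0..1}" "\<psi> ` {0..1} \<subseteq> {0..1}"
    "\<forall>t\<in>{0..1}. \<psi> (\<phi> t) = t \<and> \<phi> (\<psi> t) = t"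
  shows "\<phi> \<in> G11"
proof -
  have i1: "\<phi> ` {0..1} = {0..1}" using assms(3,4,5) by (metis image_subset_iff subsetI subset_antisym imageI)
  have i2: "\<psi> ` {0..1} = {0..1}" using assms(3,4,5) by (metis image_subset_iff subsetI subset_antisym imageI)
  show ?thesis unfolding G11_def homeomorphism_def
    using assms mono_bij_cont[OF assms(1) i1] mono_bij_cont[OF assms(2) i2] i1 i2
    by (intro CollectI conjI exI[of _ \<psi>]) auto
qed



lemma G11D:
  assumes "\<phi> \<in> G11"
  shows "\<phi> ` {0..1} = {0..1}" "inj_on \<phi> {0..1}" "\<phi> 0 = 0" "\<phi> 1 = 1"
    "\<And>x y. x \<in> {0..1} \<Longrightarrow> y \<in> {0..1} \<Longrightarrow> x < y \<Longrightarrow> \<phi> x < \<phi> y"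
proof -
  from assms obtain \<psi> where m: "mono_on {0..1} \<phi>" and h: "homeomorphism {0..1} {0..1} \<phi> \<psi>"
    unfolding G11_def by auto
  show im: "\<phi> ` {0..1} = {0..1}" using h by (simp add: homeomorphism_def)
  show inj: "inj_on \<phi> {0..1}" using h homeomorphism_apply1 by (metis inj_on_inverseI)
  show sm: "\<phi> x < \<phi> y" if "x \<in> {0..1}" "y \<in> {0..1}" "x < y" for x y
    using mono_onD[OF m, of x y] inj_onD[OF inj, of x y] that by force
  have "(0::real) \<in> \<phi> ` {0..1}" using im by auto
  then obtain x where x: "x \<in> {0..1}" "\<phi> x = 0" by auto
  have "\<phi> 0 \<le> \<phi> x" using mono_onD[OF m, of 0 x] x by auto
  moreover have "\<phi> 0 \<ge> 0" using im by auto
  ultimately show "\<phi> 0 = 0" using x by auto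
  have "(1::real) \<in> \<phi> ` {0..1}" using im by auto
  then obtain y where y: "y \<in> {0..1}" "\<phi> y = 1" by auto
  have "\<phi> y \<le> \<phi> 1" using mono_onD[OF m, of y 1] y by auto
  moreover have "\<phi> 1 \<le> 1" using im by auto
  ultimately show "\<phi> 1 = 1" using y by auto
qed

definition Inv :: "'a set \<Rightarrow> (real \<Rightarrow> 'a) \<Rightarrow> bool" where
  "Inv S g \<longleftrightarrow> g 0 \<in> S \<and> g 1 \<in> S \<and> finite {t\<in>{0..1}. g t \<in> S} \<and>
     (\<forall>s t. 0 \<le> s \<longrightarrow> s < t \<longrightarrow> t \<le> 1 \<longrightarrow> g s = g t \<longrightarrow> (\<exists>u\<in>{s..t}. g u \<in> S))"

lemma Inv_reparam:
  assumes I: "Inv S g" and G: "\<phi> \<in> G11"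
  shows "Inv S (g \<circ> \<phi>)"
proof -
  note G' = G11D[OF G]
  have "{t\<in>{0..1}. (g \<circ> \<phi>) t \<in> S} \<subseteq> {t\<in>{0..1}. \<phi> t \<in> {t\<in>{0..1}. g t \<in> S}}"
    using G'(1) by auto
  moreover have "finite {t\<in>{0..1}. \<phi> t \<in> {t\<in>{0..1}. g t \<in> S}}"
  proof -
    have "{t\<in>{0..1}. \<phi> t \<in> {t\<in>{0..1}. g t \<in> S}} \<subseteq> {0..1}" by auto
    moreover have "\<phi> ` {t\<in>{0..1}. \<phi> t \<in> {t\<in>{0..1}. g t \<in> S}} \<subseteq> {t\<in>{0..1}. g t \<in> S}" by auto
    ultimately show ?thesis using I unfolding Inv_def
      by (meson G'(2) finite_imageD finite_subset inj_on_subset)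
  qed
  ultimately have fin: "finite {t\<in>{0..1}. (g \<circ> \<phi>) t \<in> S}" by (rule finite_subset)
  have inj: "\<exists>u\<in>{s..t}. (g \<circ> \<phi>) u \<in> S" if "0 \<le> s" "s < t" "t \<le> 1" "(g \<circ> \<phi>) s = (g \<circ> \<phi>) t" for s t
  proof -
    have lt: "\<phi> s < \<phi> t" using G'(5)[of s t] that by auto
    have "\<phi> s \<in> {0..1}" "\<phi> t \<in> {0..1}" using G'(1) that by auto
    moreover have "g (\<phi> s) = g (\<phi> t)" using that(4) by simp
    ultimately have "\<exists>u\<in>{\<phi> s..\<phi> t}. g u \<in> S"
      using I lt unfolding Inv_def by auto
    then obtain u where u: "u \<in> {\<phi> s..\<phi> t}" "g u \<in> S" by blast
    then have "u \<in> \<phi> ` {0..1}" using \<open>\<phi> s \<in> {0..1}\<close> \<open>\<phi> t \<in> {0..1}\<close> G'(1) by auto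
    then obtain v where v: "v \<in> {0..1}" "u = \<phi> v" by auto
    have "s \<le> v" proof (rule ccontr)
      assume "\<not> s \<le> v" then have "\<phi> v < \<phi> s" using G'(5)[of v s] v that by auto
      then show False using u v by auto
    qed
    moreover have "v \<le> t" proof (rule ccontr)
      assume "\<not> v \<le> t" then have "\<phi> t < \<phi> v" using G'(5)[of t v] v that by auto
      then show False using u v by auto
    qed
    ultimately show ?thesis using u v by auto
  qed
  show ?thesis using I fin inj G'(3,4) unfolding Inv_def by auto
qed

lemma InvD:
  assumes "Inv S g" "0 \<le> s" "s < t" "t \<le> 1" "g s = g t"
  shows "\<exists>u\<in>{s..t}. g u \<in> S"
  using assms unfolding Inv_def by blast

lemma InvD0: "Inv S g \<Longrightarrow> g 0 \<in> S" and InvD1: "Inv S g \<Longrightarrow> g 1 \<in> S"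
  and InvDf: "Inv S g \<Longrightarrow> finite {t\<in>{0..1}. g t \<in> S}"
  unfolding Inv_def by blast+

lemma InvI:
  assumes "g 0 \<in> S" "g 1 \<in> S" "finite {t\<in>{0..1}. g t \<in> S}"
    "\<And>s t. 0 \<le> s \<Longrightarrow> s < t \<Longrightarrow> t \<le> 1 \<Longrightarrow> g s = g t \<Longrightarrow> \<exists>u\<in>{s..t}. g u \<in> S"
  shows "Inv S g"
  using assms unfolding Inv_def by blast

lemma Inv_concat:
  assumes I1: "Inv S g1" and I2: "Inv S g2" and e: "g1 1 = g2 0"
  shows "Inv S (normcomp g1 g2)"
proof -
  let ?h = "normcomp g1 g2"
  have hl: "?h t = g1 (2 * t)" if "t \<le> 1/2" for t using that by (simp add: normcomp_def)
  have hr: "?h t = g2 (2 * t - 1)" if "\<not> t \<le> 1/2" for t using that by (simp add: normcomp_def)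
  have sub: "{t\<in>{0..1}. ?h t \<in> S} \<subseteq> (\<lambda>x. x/2) ` {t\<in>{0..1}. g1 t \<in> S} \<union> (\<lambda>x. (x+1)/2) ` {t\<in>{0..1}. g2 t \<in> S}"
  proof
    fix t assume t: "t \<in> {t\<in>{0..1}. ?h t \<in> S}"
    show "t \<in> (\<lambda>x. x/2) ` {t\<in>{0..1}. g1 t \<in> S} \<union> (\<lambda>x. (x+1)/2) ` {t\<in>{0..1}. g2 t \<in> S}"
    proof (cases "t \<le> 1/2")
      case True
      have "2 * t \<in> {t\<in>{0..1}. g1 t \<in> S}" using t True hl[OF True] by simp
      moreover have "t = (2 * t)/2" by simp
      ultimately show ?thesis by blast
    next
      case False
      have "2 * t - 1 \<in> {t\<in>{0..1}. g2 t \<in> S}" using t False hr[OF False] by simp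
      moreover have "t = ((2 * t - 1)+1)/2" by simp
      ultimately show ?thesis by blast
    qed
  qed
  have fin: "finite {t\<in>{0..1}. ?h t \<in> S}"
    by (rule finite_subset[OF sub finite_UnI[OF finite_imageI[OF InvDf[OF I1]] finite_imageI[OF InvDf[OF I2]]]])
  have inj: "\<exists>u\<in>{s..t}. ?h u \<in> S" if st: "0 \<le> s" "s < t" "t \<le> 1" "?h s = ?h t" for s t
  proof (cases "t \<le> 1/2")
    case True
    have "g1 (2 * s) = g1 (2 * t)" using st(4) hl[OF True] hl[of s] True st(2) by simp
    then obtain u where u: "u \<in> {2 * s..2 * t}" "g1 u \<in> S"
      using InvD[OF I1, of "2 * s" "2 * t"] st True by auto
    have "?h (u/2) = g1 u" using hl[of "u/2"] u True by simp
    then show ?thesis using u by (intro bexI[of _ "u/2"]) auto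
  next
    case False
    show ?thesis
    proof (cases "s \<le> 1/2")
      case True
      have "?h (1/2) = g1 1" using hl[of "1/2"] by simp
      then show ?thesis using True False InvD1[OF I1]
        by (intro bexI[of _ "1/2"]) auto
    next
      case F2: False
      have "g2 (2 * s - 1) = g2 (2 * t - 1)" using st(4) hr[OF False] hr[OF F2] by simp
      then obtain u where u: "u \<in> {2 * s - 1..2 * t - 1}" "g2 u \<in> S"
        using InvD[OF I2, of "2 * s - 1" "2 * t - 1"] st F2 by auto
      have nl: "\<not> (u+1)/2 \<le> 1/2" using u F2 by auto
      have ar: "2 * ((u+1)/2) - 1 = u" by (simp add: field_simps)
      have "?h ((u+1)/2) = g2 u" using hr[OF nl] unfolding ar .
      then show ?thesis using u by (intro bexI[of _ "(u+1)/2"]) auto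
    qed
  qed
  have h0: "?h 0 \<in> S" using hl[of 0] InvD0[OF I1] by simp
  have h1: "?h 1 \<in> S" using hr[of 1] InvD1[OF I2] by simp
  show ?thesis by (rule InvI[OF h0 h1 fin inj])
qed

lemma Inv_ext:
  assumes "Inv S g" "\<forall>t\<in>{0..1}. h t = g t"
  shows "Inv S h"
proof -
  have "{t\<in>{0..1}. h t \<in> S} = {t\<in>{0..1}. g t \<in> S}" using assms(2) by auto
  moreover have "\<And>s t. 0 \<le> s \<Longrightarrow> s < t \<Longrightarrow> t \<le> 1 \<Longrightarrow> h s = h t \<Longrightarrow> \<exists>u\<in>{s..t}. h u \<in> S"
  proof -
    fix s t assume st: "0 \<le> s" "s < t" "t \<le> (1::real)" "h s = h t"
    moreover have "g s = g t" using st assms(2) by auto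
    ultimately obtain u where "u\<in>{s..t}" "g u \<in> S" using assms(1) unfolding Inv_def by blast
    then show "\<exists>u\<in>{s..t}. h u \<in> S" using assms(2) st by (intro bexI[of _ u]) auto
  qed
  ultimately show ?thesis using assms unfolding Inv_def by auto
qed

lemma gen_paths_Inv:
  assumes "g \<in> gen_paths P" "\<forall>g\<in>P. Inv S g"
  shows "Inv S g"
  using assms(1)
  proof induction
  case (base g) then show ?case using assms(2) by blast
next
  case (reparam g \<phi>) then show ?case by (intro Inv_reparam)
next
  case (concat g1 g2) then show ?case by (intro Inv_concat)
next
  case (ext g h) then show ?case by (intro Inv_ext[of S g h])
qed

lemma Inv_fix:
  fixes \<psi> :: "real \<Rightarrow> real"
  assumes I: "Inv S g" and im: "\<psi> ` {0..1} \<subseteq> {0..1}" and m: "mono_on {0..1} \<psi>"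
    and eq: "\<forall>t\<in>{0..1}. g (\<psi> t) = g t"
  shows "\<forall>t\<in>{0..1}. \<psi> t = t"
proof -
  define T where "T = {t\<in>{0..1}. g t \<in> S}"
  have fin: "finite T" using I unfolding Inv_def T_def by auto
  have inj: "\<exists>u\<in>{s..t}. g u \<in> S" if "0 \<le> s" "s < t" "t \<le> 1" "g s = g t" for s t
    using I that unfolding Inv_def by auto
  have psiT: "\<psi> t \<in> T \<longleftrightarrow> t \<in> T" if "t \<in> {0..1}" for t
    using that im eq unfolding T_def by (auto simp: image_subset_iff)
  have strict: "\<psi> a < \<psi> b" if "a \<in> T" "b \<in> T" "a < b" for a b
  proof (rule ccontr)
    assume "\<not> \<psi> a < \<psi> b"
    then have eqab: "\<psi> a = \<psi> b" using mono_onD[OF m, of a b] that unfolding T_def by auto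
    have "infinite {a<..<b}" using that by simp
    then have "\<not> {a<..<b} \<subseteq> T" using fin finite_subset by blast
    then obtain c where c: "c \<in> {a<..<b}" "c \<notin> T" by blast
    have c01: "c \<in> {0..1}" using c that unfolding T_def by auto
    have "\<psi> a \<le> \<psi> c" "\<psi> c \<le> \<psi> b" using mono_onD[OF m] c that c01 unfolding T_def by auto
    then have "\<psi> c = \<psi> a" using eqab by auto
    moreover have "\<psi> a \<in> T" using psiT that unfolding T_def by auto
    ultimately show False using psiT[OF c01] c by auto
  qed
  have fixT: "\<psi> t = t" if tT: "t \<in> T" for t
  proof (rule ccontr)
    assume ne: "\<psi> t \<noteq> t"
    have injT: "inj_on \<psi> T" using strict by (metis inj_on_def linorder_neq_iff order_less_irrefl)
    have pT: "\<psi> ` T \<subseteq> T" using psiT unfolding T_def by auto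
    show False
    proof (cases "\<psi> t < t")
      case True
      let ?A = "{s\<in>T. s < t}" and ?B = "{s\<in>T. s < \<psi> t}"
      have "\<psi> ` ?A \<subseteq> ?B" using strict pT tT by auto
      then have "card ?A \<le> card ?B" using injT fin
        by (metis (no_types, lifting) card_inj_on_le inj_on_subset mem_Collect_eq rev_finite_subset subsetI)
      moreover have "?B \<subset> ?A" using True pT tT by auto
      then have "card ?B < card ?A" using fin by (intro psubset_card_mono) auto
      ultimately show False by simp
    next
      case False
      then have F: "t < \<psi> t" using ne by auto
      let ?A = "{s\<in>T. t < s}" and ?B = "{s\<in>T. \<psi> t < s}"
      have "\<psi> ` ?A \<subseteq> ?B" using strict pT tT by auto
      then have "card ?A \<le> card ?B" using injT fin
        by (metis (no_types, lifting) card_inj_on_le inj_on_subset mem_Collect_eq rev_finite_subset subsetI)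
      moreover have "?B \<subset> ?A" using F pT tT by auto
      then have "card ?B < card ?A" using fin by (intro psubset_card_mono) auto
      ultimately show False by simp
    qed
  qed
  show ?thesis
  proof
    fix t :: real assume t: "t \<in> {0..1}"
    show "\<psi> t = t"
    proof (cases "t \<in> T")
      case True then show ?thesis using fixT by auto
    next
      case nT: False
      have pt: "\<psi> t \<in> {0..1}" using subsetD[OF im imageI[OF t]] .
      have pnT: "\<psi> t \<notin> T" using psiT[OF t] nT by auto
      show ?thesis
      proof (rule ccontr)
        assume ne: "\<psi> t \<noteq> t"
        show False
        proof (cases "t < \<psi> t")
          case True
          have gg: "g t = g (\<psi> t)" using eq t by auto
          obtain u where u: "u \<in> {t..\<psi> t}" "g u \<in> S" using inj[of t "\<psi> t", OF _ True _ gg] t pt by auto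
          then have uT: "u \<in> T" using t pt unfolding T_def by auto
          then have "t < u" "u < \<psi> t" using u nT pnT by (auto simp: order_le_less)
          then have "\<psi> t \<le> \<psi> u" using mono_onD[OF m, of t u] t uT unfolding T_def by auto
          then show False using fixT[OF uT] \<open>u < \<psi> t\<close> by auto
        next
          case False
          then have lt: "\<psi> t < t" using ne by auto
          have gg: "g (\<psi> t) = g t" using eq t by auto
          obtain u where u: "u \<in> {\<psi> t..t}" "g u \<in> S" using inj[of "\<psi> t" t, OF _ lt _ gg] t pt by auto
          then have uT: "u \<in> T" using t pt unfolding T_def by auto
          then have "\<psi> t < u" "u < t" using u nT pnT by (auto simp: order_le_less)
          then have "\<psi> u \<le> \<psi> t" using mono_onD[OF m, of u t] t uT unfolding T_def by auto
          then show False using fixT[OF uT] \<open>\<psi> t < u\<close> by auto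
        qed
      qed
    qed
  qed
qed



definition Good :: "'a set \<Rightarrow> 'a mdspace \<Rightarrow> bool" where
  "Good S A \<longleftrightarrow> states A = S \<and> S \<subseteq> topspace (space A) \<and> (\<forall>g\<in>paths A. Inv S g)"

lemma gin_new:
  assumes "z \<in> disk n" "z \<notin> sphere_m1 n" "0 < r" "r < 1"
  shows "Gin z r \<in> glob_carrier (disk n) - glob_carrier (sphere_m1 n)"
proof -
  have "Gin z r = gq (z, r)" using assms by (simp add: gq_def)
  then have "Gin z r \<in> glob_carrier (disk n)" using assms unfolding glob_carrier_def by force
  moreover have "Gin z r \<notin> glob_carrier (sphere_m1 n)"
  proof
    assume "Gin z r \<in> glob_carrier (sphere_m1 n)"
    then obtain z' r' where "z' \<in> sphere_m1 n" "Gin z r = gq (z', r')"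
      unfolding glob_carrier_def by auto
    then show False using assms by (auto simp: gq_def split: if_splits)
  qed
  ultimately show ?thesis by blast
qed

lemma Good_attach:
  assumes G: "Good S A" and C: "cell_attach A B"
  shows "Good S B"
proof -
  obtain n f where md: "md_morphism (Glob (sphere_m1 n)) A f"
    and top: "topspace (space A) \<subseteq> topspace (space B)"
    and inj: "inj_on f (glob_carrier (disk n) - glob_carrier (sphere_m1 n))"
    and im: "f ` (glob_carrier (disk n) - glob_carrier (sphere_m1 n)) = topspace (space B) - topspace (space A)"
    and st: "states B = states A \<union> f ` {Gbot, Gtop}"
    and pa: "paths B = gen_paths (paths A \<union> (\<lambda>g. f \<circ> g) ` glob_paths (disk n))"
    using C unfolding cell_attach_def by (elim exE conjE) (rule that)
  have "f ` states (Glob (sphere_m1 n)) \<subseteq> states A" using md unfolding md_morphism_def by blast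
  then have fst: "f Gbot \<in> S" "f Gtop \<in> S" using G unfolding Glob_def Good_def by auto
  have sA: "states A = S" using G unfolding Good_def by blast
  have stB: "states B = S" unfolding st sA using fst by blast
  have SB: "S \<subseteq> topspace (space B)" using G top unfolding Good_def by blast
  have new: "\<forall>g\<in>(\<lambda>g. f \<circ> g) ` glob_paths (disk n). Inv S g"
  proof
    fix h assume "h \<in> (\<lambda>g. f \<circ> g) ` glob_paths (disk n)"
    then obtain z \<phi> where z: "z \<in> disk n" and ph: "\<phi> \<in> G11" and h: "h = f \<circ> (\<lambda>t. gq (z, \<phi> t))"
      unfolding glob_paths_def by auto
    note P = G11D[OF ph]
    show "Inv S h"
    proof (cases "z \<in> sphere_m1 n")
      case True
      then have "(\<lambda>t. gq (z, \<phi> t)) \<in> paths (Glob (sphere_m1 n))"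
        using ph unfolding Glob_def glob_paths_def by auto
      then have "h \<in> paths A" using md h unfolding md_morphism_def by auto
      then show ?thesis using G unfolding Good_def by auto
    next
      case False
      have inner: "\<phi> t \<in> {0<..<1}" if "t \<in> {0<..<1}" for t
        using P(5)[of 0 t] P(5)[of t 1] P(3,4) that by auto
      have hin: "h t = f (Gin z (\<phi> t))" if "t \<in> {0<..<1}" for t
        using inner[OF that] h by (auto simp: gq_def)
      have hnS: "h t \<notin> S" if "t \<in> {0<..<1}" for t
      proof -
        have "Gin z (\<phi> t) \<in> glob_carrier (disk n) - glob_carrier (sphere_m1 n)"
          using gin_new[OF z False] inner[OF that] by auto
        then have "h t \<notin> topspace (space A)" using im hin[OF that] by blast
        then show ?thesis using G unfolding Good_def by auto
      qed
      have h0: "h 0 = f Gbot" "h 1 = f Gtop" using h P(3,4) by (auto simp: gq_def)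
      have "{t\<in>{0..1}. h t \<in> S} \<subseteq> {0,1}"
      proof
        fix t assume a: "t \<in> {t\<in>{0..1}. h t \<in> S}"
        show "t \<in> {0,1}"
        proof (rule ccontr)
          assume "t \<notin> {0,1}"
          then have "t \<in> {0<..<1}" using a by auto
          then show False using hnS a by blast
        qed
      qed
      then have fin: "finite {t\<in>{0..1}. h t \<in> S}" by (rule finite_subset) auto
      have injp: "\<exists>u\<in>{s..t}. h u \<in> S" if st: "0 \<le> s" "s < t" "t \<le> 1" "h s = h t" for s t
      proof (cases "s = 0 \<or> t = 1")
        case True then show ?thesis
        proof
          assume "s = 0" then show ?thesis using h0 fst st by (intro bexI[of _ s]) auto
        next
          assume "t = 1" then show ?thesis using h0 fst st by (intro bexI[of _ t]) auto
        qed
      next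
        case False
        then have "s \<in> {0<..<1}" "t \<in> {0<..<1}" using st by auto
        then have "f (Gin z (\<phi> s)) = f (Gin z (\<phi> t))" using hin[of s] hin[of t] st(4) by simp
        moreover have "Gin z (\<phi> s) \<in> glob_carrier (disk n) - glob_carrier (sphere_m1 n)"
          "Gin z (\<phi> t) \<in> glob_carrier (disk n) - glob_carrier (sphere_m1 n)"
          using gin_new[OF z \<open>z \<notin> sphere_m1 n\<close>] inner \<open>s \<in> {0<..<1}\<close> \<open>t \<in> {0<..<1}\<close> by auto
        ultimately have "\<phi> s = \<phi> t" using inj_onD[OF inj] by blast
        moreover have "\<phi> s < \<phi> t" using P(5)[of s t] st by auto
        ultimately show ?thesis by auto
      qed
      show ?thesis unfolding Inv_def using h0 fst fin injp by auto
    qed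
  qed
  have all: "\<forall>g\<in>paths A \<union> (\<lambda>g. f \<circ> g) ` glob_paths (disk n). Inv S g"
    using new G unfolding Good_def by blast
  have "\<forall>g\<in>paths B. Inv S g"
  proof
    fix g assume "g \<in> paths B"
    then have "g \<in> gen_paths (paths A \<union> (\<lambda>g. f \<circ> g) ` glob_paths (disk n))" unfolding pa .
    then show "Inv S g" by (rule gen_paths_Inv[OF _ all])
  qed
  then show ?thesis using stB SB unfolding Good_def by blast
qed

lemma Good_colim:
  assumes "I \<noteq> {}" "\<forall>\<mu>\<in>I. Good S (X \<mu>)" "colim_of I X Y"
  shows "Good S Y"
proof -
  have c1: "topspace (space Y) = (\<Union>\<nu>\<in>I. topspace (space (X \<nu>)))"
    using assms(3) unfolding colim_of_def by (elim conjE)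
  have c3: "states Y = (\<Union>\<nu>\<in>I. states (X \<nu>))"
    using assms(3) unfolding colim_of_def by (elim conjE)
  have c4: "paths Y = gen_paths (\<Union>\<nu>\<in>I. paths (X \<nu>))"
    using assms(3) unfolding colim_of_def by (elim conjE)
  have s: "states (X \<mu>) = S" if "\<mu> \<in> I" for \<mu> using assms(2) that unfolding Good_def by blast
  have "states Y = S" unfolding c3 using s assms(1) by blast
  moreover have "S \<subseteq> topspace (space Y)"
  proof -
    obtain \<mu> where mu: "\<mu> \<in> I" using assms(1) by blast
    then have "S \<subseteq> topspace (space (X \<mu>))" using assms(2) unfolding Good_def by blast
    then show ?thesis unfolding c1 using mu by blast
  qed
  moreover have "\<forall>g\<in>paths Y. Inv S g"
  proof
    fix g assume "g \<in> paths Y"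
    then have g: "g \<in> gen_paths (\<Union>\<nu>\<in>I. paths (X \<nu>))" unfolding c4 .
    have "\<forall>h\<in>(\<Union>\<nu>\<in>I. paths (X \<nu>)). Inv S h" using assms(2) unfolding Good_def by blast
    then show "Inv S g" by (rule gen_paths_Inv[OF g])
  qed
  ultimately show ?thesis unfolding Good_def by blast
qed

lemma gen_paths_empty: "g \<in> gen_paths {} \<Longrightarrow> False"
  by (induction rule: gen_paths.induct) auto

lemma tower_Good:
  fixes lam :: "'i::wellorder"
  assumes C: "cellular lam X Y"
  shows "\<forall>\<nu><lam. Good (states (X (LEAST x. True))) (X \<nu>)"
proof -
  have c1: "\<forall>\<nu><lam. (\<forall>\<mu>. \<not> \<mu> < \<nu>) \<longrightarrow>
         space (X \<nu>) = discrete_topology (states (X \<nu>)) \<and> paths (X \<nu>) = {}"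
    using C unfolding cellular_def by (elim conjE)
  have c2: "\<forall>\<nu><lam. \<forall>\<mu><\<nu>. (\<forall>\<kappa>. \<not> (\<mu> < \<kappa> \<and> \<kappa> < \<nu>)) \<longrightarrow> cell_attach (X \<mu>) (X \<nu>)"
    using C unfolding cellular_def by (elim conjE)
  have c3: "\<forall>\<nu><lam. (\<exists>\<mu>. \<mu> < \<nu>) \<and> (\<forall>\<mu><\<nu>. \<exists>\<kappa>. \<mu> < \<kappa> \<and> \<kappa> < \<nu>) \<longrightarrow>
         colim_of {\<mu>. \<mu> < \<nu>} X (X \<nu>)"
    using C unfolding cellular_def by (elim conjE)
  define m :: 'i where "m = (LEAST x. True)"
  have mle: "m \<le> x" for x unfolding m_def by (rule Least_le) simp
  have "\<nu> < lam \<longrightarrow> Good (states (X m)) (X \<nu>)" for \<nu>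
  proof (induction \<nu> rule: less_induct)
    case (less \<nu>)
    show ?case
    proof
      assume nl: "\<nu> < lam"
      show "Good (states (X m)) (X \<nu>)"
      proof (cases "\<exists>\<mu>. \<mu> < \<nu>")
        case False
        then have "\<nu> = m" using mle[of \<nu>] by (metis order_le_less)
        moreover have "space (X \<nu>) = discrete_topology (states (X \<nu>)) \<and> paths (X \<nu>) = {}"
          using c1 False nl by blast
        ultimately show ?thesis unfolding Good_def by auto
      next
        case True
        show ?thesis
        proof (cases "\<exists>\<mu><\<nu>. \<forall>\<kappa>. \<not> (\<mu> < \<kappa> \<and> \<kappa> < \<nu>)")
          case True
          then obtain \<mu> where mu: "\<mu> < \<nu>" "\<forall>\<kappa>. \<not> (\<mu> < \<kappa> \<and> \<kappa> < \<nu>)" by blast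
          then have ca: "cell_attach (X \<mu>) (X \<nu>)" using c2 nl by blast
          have "\<mu> < lam" using mu(1) nl by (rule less_trans)
          then have "Good (states (X m)) (X \<mu>)" using less mu by blast
          then show ?thesis using ca by (rule Good_attach)
        next
          case False
          then have "\<forall>\<mu><\<nu>. \<exists>\<kappa>. \<mu> < \<kappa> \<and> \<kappa> < \<nu>" by blast
          then have col: "colim_of {\<mu>. \<mu> < \<nu>} X (X \<nu>)" using c3 nl \<open>\<exists>\<mu>. \<mu> < \<nu>\<close> by blast
          have "\<forall>\<mu>\<in>{\<mu>. \<mu> < \<nu>}. Good (states (X m)) (X \<mu>)"
          proof
            fix \<mu> assume "\<mu> \<in> {\<mu>. \<mu> < \<nu>}"
            then have mu: "\<mu> < \<nu>" by simp
            then have "\<mu> < lam" using nl by (rule less_trans)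
            then show "Good (states (X m)) (X \<mu>)" using less mu by blast
          qed
          moreover have "{\<mu>. \<mu> < \<nu>} \<noteq> {}" using \<open>\<exists>\<mu>. \<mu> < \<nu>\<close> by blast
          ultimately show ?thesis using col by (intro Good_colim)
        qed
      qed
    qed
  qed
  then show ?thesis unfolding m_def by blast
qed

lemma cellular_Inv:
  fixes lam :: "'i::wellorder"
  assumes C: "cellular lam X Y" and g: "g \<in> paths Y"
  shows "Inv (states Y) g"
proof -
  have col: "colim_of {\<nu>. \<nu> < lam} X Y" using C unfolding cellular_def by (elim conjE)
  have c4: "paths Y = gen_paths (\<Union>\<nu>\<in>{\<nu>. \<nu> < lam}. paths (X \<nu>))"
    using col unfolding colim_of_def by (elim conjE)
  have gg: "g \<in> gen_paths (\<Union>\<nu>\<in>{\<nu>. \<nu> < lam}. paths (X \<nu>))" using g unfolding c4 .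
  have ne: "{\<nu>. \<nu> < lam} \<noteq> {}"
  proof
    assume e: "{\<nu>. \<nu> < lam} = {}"
    have "(\<Union>\<nu>\<in>{\<nu>. \<nu> < lam}. paths (X \<nu>)) = {}" using e by blast
    then have "g \<in> gen_paths {}" using gg by metis
    then show False by (rule gen_paths_empty)
  qed
  have tg: "\<forall>\<nu><lam. Good (states (X (LEAST x. True))) (X \<nu>)" by (rule tower_Good[OF C])
  have "\<forall>\<nu>\<in>{\<nu>. \<nu> < lam}. Good (states (X (LEAST x. True))) (X \<nu>)"
  proof
    fix \<nu> assume "\<nu> \<in> {\<nu>. \<nu> < lam}"
    then have "\<nu> < lam" by simp
    then show "Good (states (X (LEAST x. True))) (X \<nu>)" using tg by blast
  qed
  then have "Good (states (X (LEAST x. True))) Y"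
    by (rule Good_colim[OF ne _ col])
  then have "\<forall>h\<in>paths Y. Inv (states Y) h" unfolding Good_def by metis
  then show ?thesis using g by blast
qed


lemma mono_comp01:
  fixes a b :: "real \<Rightarrow> real"
  assumes "mono_on {0..1} a" "mono_on {0..1} b" "b ` {0..1} \<subseteq> {0..1}"
  shows "mono_on {0..1} (\<lambda>t. a (b t))"
proof (rule mono_onI)
  fix r s :: real assume rs: "r \<in> {0..1}" "s \<in> {0..1}" "r \<le> s"
  then have "b r \<le> b s" using mono_onD[OF assms(2)] by auto
  moreover have "b r \<in> {0..1}" using subsetD[OF assms(3) imageI[OF rs(1)]] .
  moreover have "b s \<in> {0..1}" using subsetD[OF assms(3) imageI[OF rs(2)]] .
  ultimately show "a (b r) \<le> a (b s)" using mono_onD[OF assms(1)] by auto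
qed

theorem theorem6p6:
  fixes lam :: "'i::wellorder" and X :: "'i \<Rightarrow> 'a mdspace" and Y :: "'a mdspace"
    and g1 g2 :: "real \<Rightarrow> 'a" and \<phi>1 \<phi>2 :: "real \<Rightarrow> real"
  assumes "cellular lam X Y"
    and "g1 \<in> paths Y" and "g2 \<in> paths Y"
    and "\<phi>1 ` {0..1} \<subseteq> {0..1}" and "mono_on {0..1} \<phi>1" and "\<phi>1 0 = 0" and "\<phi>1 1 = 1"
    and "\<phi>2 ` {0..1} \<subseteq> {0..1}" and "mono_on {0..1} \<phi>2" and "\<phi>2 0 = 0" and "\<phi>2 1 = 1"
    and "\<forall>t\<in>{0..1}. g1 (\<phi>1 t) = g2 t"
    and "\<forall>t\<in>{0..1}. g1 t = g2 (\<phi>2 t)"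
  shows "\<phi>1 \<in> G11 \<and> \<phi>2 \<in> G11 \<and> (\<forall>t\<in>{0..1}. \<phi>2 (\<phi>1 t) = t \<and> \<phi>1 (\<phi>2 t) = t)"
proof -
  have I1: "Inv (states Y) g1" using cellular_Inv[OF assms(1,2)] .
  have I2: "Inv (states Y) g2" using cellular_Inv[OF assms(1,3)] .
  have a: "\<forall>t\<in>{0..1}. \<phi>1 (\<phi>2 t) = t"
  proof (rule Inv_fix[OF I1])
    show "(\<lambda>t. \<phi>1 (\<phi>2 t)) ` {0..1} \<subseteq> {0..1}" using assms(4,8) by auto
    show "mono_on {0..1} (\<lambda>t. \<phi>1 (\<phi>2 t))" using mono_comp01[OF assms(5,9,8)] .
    show "\<forall>t\<in>{0..1}. g1 (\<phi>1 (\<phi>2 t)) = g1 t"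
    proof
      fix t :: real assume t: "t \<in> {0..1}"
      then have "\<phi>2 t \<in> {0..1}" using subsetD[OF assms(8) imageI[OF t]] by simp
      then have "g1 (\<phi>1 (\<phi>2 t)) = g2 (\<phi>2 t)" using assms(12) by auto
      also have "\<dots> = g1 t" using assms(13) t by auto
      finally show "g1 (\<phi>1 (\<phi>2 t)) = g1 t" .
    qed
  qed
  have b: "\<forall>t\<in>{0..1}. \<phi>2 (\<phi>1 t) = t"
  proof (rule Inv_fix[OF I2])
    show "(\<lambda>t. \<phi>2 (\<phi>1 t)) ` {0..1} \<subseteq> {0..1}" using assms(4,8) by auto
    show "mono_on {0..1} (\<lambda>t. \<phi>2 (\<phi>1 t))" using mono_comp01[OF assms(9,5,4)] .
    show "\<forall>t\<in>{0..1}. g2 (\<phi>2 (\<phi>1 t)) = g2 t"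
    proof
      fix t :: real assume t: "t \<in> {0..1}"
      then have "\<phi>1 t \<in> {0..1}" using subsetD[OF assms(4) imageI[OF t]] by simp
      then have "g2 (\<phi>2 (\<phi>1 t)) = g1 (\<phi>1 t)" using assms(13) by auto
      also have "\<dots> = g2 t" using assms(12) t by auto
      finally show "g2 (\<phi>2 (\<phi>1 t)) = g2 t" .
    qed
  qed
  have "\<phi>1 \<in> G11" using G11I[OF assms(5,9,4,8)] a b by auto
  moreover have "\<phi>2 \<in> G11" using G11I[OF assms(9,5,8,4)] a b by auto
  ultimately show ?thesis using a b by auto
qed

end
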